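(* Consider the closed-loop system $\Sigma$: $\dot x(t)=f\big(x(t),k(x(t_{k(t)}))\big)$ described in the context, with control updates generated by the ideal sampling logic based on the condition $\gamma_2(4\|e(t)\|)\le\lambda(1-c)V(x(t))$, $c\in(0,1)$. Assume: (A1) $\lim_{n\to\infty}h_n=\infty$ and there exist $\kappa\ge0$, $\tau>0$ such that $|\Xi(t)|\le\kappa+t/\tau$ for all $t\ge0$; (A2) there exists $\mu>0$ such that $\gamma_2(4r)\le\mu\,\alpha_1(r)$ for all $r\ge0$. Let $\omega_1=c\lambda$ and $\omega_2=\lambda(1-c)+2\mu$. If $$\tau>\frac{\omega_1}{\omega_1+\omega_2}=\frac{c\lambda}{\lambda+2\mu},$$ then any solution of $\Sigma$ satisfies, for all $t\ge0$, $$\|x(t)\|\le\alpha_1^{-1}\Big(e^{\kappa(\omega_1+\omega_2)}\,e^{-[\omega_1-(\omega_1+\omega_2)/\tau]\,t}\,\alpha_2(\|x(0)\|)\Big).$$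
   Context: Plant: $\dot x=f(x,u)$, $x\in\mathbb R^{n_x}$. There is a smooth feedback $u=k(x)$, a smooth function $V$, class $\mathcal K_\infty$ functions $\alpha_1,\alpha_2,\gamma_2$ and $\lambda>0$ such that for all $x,e$: $\alpha_1(\|x\|)\le V(x)\le\alpha_2(\|x\|)$ and $\nabla V(x)f(x,k(x+e))\le-\lambda V(x)+\gamma_2(\|e\|)$. Norms are Euclidean. DoS: a sequence $\{h_n\}_{n\in\mathbb N}$, $h_0\ge0$, and durations $\tau_n>0$ define DoS intervals $H_n=[h_n,h_n+\tau_n[$ during which no information is transmitted from sensor to actuator. $\Theta(t):=[0,t]\setminus\bigcup_n H_n$ and $\Xi(t):=\bigcup_n H_n\cap[0,t]$, with $|\Xi(t)|$ its total length. Given control update times $\{t_k\}_{k\in\mathbb N}$ with $t_0=0$, let $k(t):=-1$ if $\Theta(t)=\emptyset$ and otherwise $k(t):=\sup\{k\in\mathbb N: t_k\in\Theta(t)\}$; with the convention $x(t_{-1}):=0$. The applied input is $u(t)=k(x(t_{k(t)}))$, and $e(t):=x(t_{k(t)})-x(t)$. Ideal sampling logic: given $t_k$, (i) if $t_k$ does not belong to any DoS interval, $t_{k+1}$ is the infimal time larger than $t_k$ at which $\gamma_2(4\|e(t)\|)\le\lambda(1-c)V(x(t))$ is violated; (ii) if $t_k\in H_n$, then $t_{k+1}:=h_n+\tau_n$. *)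

theory Defs
  imports "HOL-Analysis.Analysis"
begin

definition classK_inf :: "(real \<Rightarrow> real) \<Rightarrow> bool" where
  "classK_inf \<alpha> \<longleftrightarrow> \<alpha> 0 = 0 \<and> continuous_on {0..} \<alpha> \<and> strict_mono_on {0..} \<alpha>
      \<and> filterlim \<alpha> at_top at_top"

definition DoS_int :: "(nat \<Rightarrow> real) \<Rightarrow> (nat \<Rightarrow> real) \<Rightarrow> nat \<Rightarrow> real set" where
  "DoS_int h dur n = {h n ..< h n + dur n}"

definition Theta :: "(nat \<Rightarrow> real) \<Rightarrow> (nat \<Rightarrow> real) \<Rightarrow> real \<Rightarrow> real set" where
  "Theta h dur t = {0..t} - (\<Union>n. DoS_int h dur n)"

definition Xi :: "(nat \<Rightarrow> real) \<Rightarrow> (nat \<Rightarrow> real) \<Rightarrow> real \<Rightarrow> real set" where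
  "Xi h dur t = (\<Union>n. DoS_int h dur n) \<inter> {0..t}"

text \<open>Update times are extended reals; the value \<infinity> means "no further update"
  (the infimum of an empty set of violation times).
  kset = {k. t_k \<in> Theta(t)}; k(t) = Max kset, or -1 if kset is empty.\<close>
definition kset :: "(nat \<Rightarrow> real) \<Rightarrow> (nat \<Rightarrow> real) \<Rightarrow> (nat \<Rightarrow> ereal) \<Rightarrow> real \<Rightarrow> nat set" where
  "kset h dur tk t = {k. \<exists>r. tk k = ereal r \<and> r \<in> Theta h dur t}"

definition kidx :: "(nat \<Rightarrow> real) \<Rightarrow> (nat \<Rightarrow> real) \<Rightarrow> (nat \<Rightarrow> ereal) \<Rightarrow> real \<Rightarrow> int" where
  "kidx h dur tk t = (if kset h dur tk t = {} then -1 else int (Max (kset h dur tk t)))"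

text \<open>x(t_{k(t)}), with the convention x(t_{-1}) = 0.\<close>
definition held :: "(real \<Rightarrow> 'a::real_vector) \<Rightarrow> (nat \<Rightarrow> real) \<Rightarrow> (nat \<Rightarrow> real) \<Rightarrow> (nat \<Rightarrow> ereal) \<Rightarrow> real \<Rightarrow> 'a" where
  "held x h dur tk t = (if kidx h dur tk t = -1 then 0
       else x (real_of_ereal (tk (nat (kidx h dur tk t)))))"

definition is_solution ::
  "('a::euclidean_space \<Rightarrow> 'b \<Rightarrow> 'a) \<Rightarrow> ('a \<Rightarrow> 'b) \<Rightarrow> ('a \<Rightarrow> real) \<Rightarrow> (real \<Rightarrow> real)
   \<Rightarrow> real \<Rightarrow> real \<Rightarrow> (nat \<Rightarrow> real) \<Rightarrow> (nat \<Rightarrow> real) \<Rightarrow> (nat \<Rightarrow> ereal) \<Rightarrow> (real \<Rightarrow> 'a) \<Rightarrow> bool"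
where
  "is_solution f kfb V \<gamma>2 lam c h dur tk x \<longleftrightarrow>
     continuous_on {0..} x
   \<and> tk 0 = 0
   \<and> (\<forall>t. finite {k. tk k \<le> ereal t})
   \<and> (\<forall>k. tk k = \<infinity> \<longrightarrow> tk (Suc k) = \<infinity>)
   \<and> (\<forall>k r. tk k = ereal r \<longrightarrow> (\<forall>n. r \<notin> DoS_int h dur n) \<longrightarrow>
        tk (Suc k) = Inf (ereal ` {s. s > r \<and>
            \<not> (\<gamma>2 (4 * norm (x r - x s)) \<le> lam * (1 - c) * V (x s))}))
   \<and> (\<forall>k r n. tk k = ereal r \<longrightarrow> r \<in> DoS_int h dur n \<longrightarrow>
        tk (Suc k) = ereal (h n + dur n))
   \<and> (\<forall>t>0. (\<forall>k. tk k \<noteq> ereal t) \<longrightarrow>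
        (x has_vector_derivative f (x t) (kfb (held x h dur tk t))) (at t))"

end

theory Submission
  imports Defs
begin


lemma cmp:
  fixes F F' :: "real \<Rightarrow> real"
  assumes ab: "a \<le> b" and cont: "continuous_on {a..b} F"
    and der: "\<And>s. a < s \<Longrightarrow> s < b \<Longrightarrow> (F has_real_derivative F' s) (at s)"
    and Fa: "F a \<le> 0" and neg: "\<And>s. a < s \<Longrightarrow> s < b \<Longrightarrow> F s > 0 \<Longrightarrow> F' s \<le> 0"
  shows "F b \<le> 0"
proof (rule ccontr)
  assume Fb: "\<not> F b \<le> 0"
  define S where "S = {a..b} \<inter> F -` {..0}"
  have cl: "closed S" unfolding S_def by (rule continuous_closed_preimage[OF cont]) auto
  have ne: "S \<noteq> {}" using ab Fa by (auto simp: S_def)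
  have bd: "bdd_above S" unfolding S_def by (auto intro: bdd_aboveI[of _ b])
  define s0 where "s0 = Sup S"
  have s0S: "s0 \<in> S" unfolding s0_def using closed_contains_Sup[OF ne bd cl] .
  hence s0b: "a \<le> s0" "s0 \<le> b" "F s0 \<le> 0" by (auto simp: S_def)
  hence lt: "s0 < b" using Fb by (cases "s0 = b") auto
  have pos: "F s > 0" if "s0 < s" "s \<le> b" for s
  proof (rule ccontr)
    assume "\<not> F s > 0"
    hence "s \<in> S" using that s0b by (auto simp: S_def)
    hence "s \<le> s0" unfolding s0_def using bd by (rule cSup_upper)
    thus False using that by simp
  qed
  have "\<exists>l z. s0 < z \<and> z < b \<and> DERIV F z :> l \<and> F b - F s0 = (b - s0) * l"
    apply (rule MVT[OF lt])
    using cont s0b apply (auto intro: continuous_on_subset)[1]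
    using der s0b real_differentiable_def by force
  then obtain l z where z: "s0 < z" "z < b" "DERIV F z :> l" "F b - F s0 = (b - s0) * l" by blast
  have "l = F' z" using DERIV_unique[OF z(3) der] z s0b by simp
  hence "l \<le> 0" using neg[of z] pos[of z] z s0b by simp
  hence "(b - s0) * l \<le> 0" using lt by (simp add: mult_nonneg_nonpos)
  thus False using z(4) s0b Fb by simp
qed

lemma gsum:
  assumes Kg: "classK_inf g" and "0 \<le> pp" "0 \<le> qq" "0 \<le> u" "u \<le> pp + qq"
  shows "g u \<le> g (2*pp) + g (2*qq)"
proof -
  have sm: "strict_mono_on {0..} g" using Kg by (simp add: classK_inf_def)
  have nn: "g z \<ge> 0" if "z \<ge> 0" for z
    using strict_mono_on_leD[OF sm, of 0 z] that Kg by (simp add: classK_inf_def)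
  show ?thesis
  proof (cases "pp \<le> qq")
    case True
    hence "g u \<le> g (2*qq)" using assms by (intro strict_mono_on_leD[OF sm]) auto
    thus ?thesis using nn[of "2*pp"] assms by simp
  next
    case False
    hence "g u \<le> g (2*pp)" using assms by (intro strict_mono_on_leD[OF sm]) auto
    thus ?thesis using nn[of "2*qq"] assms by simp
  qed
qed

lemma chain_V:
  assumes "\<forall>z. (V has_derivative DV z) (at z)"
    and "(x has_vector_derivative v) (at t)"
  shows "((\<lambda>s. V (x s)) has_real_derivative DV (x t) v) (at t)"
proof -
  have d1: "(x has_derivative (\<lambda>h. h *\<^sub>R v)) (at t)" using assms(2) by (simp add: has_vector_derivative_def)
  have d2: "(V has_derivative DV (x t)) (at (x t))" using assms(1) by simp
  have bl: "bounded_linear (DV (x t))" using d2 by (rule has_derivative_bounded_linear)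
  have "((V \<circ> x) has_derivative (DV (x t) \<circ> (\<lambda>h. h *\<^sub>R v))) (at t)" by (rule diff_chain_at[OF d1 d2])
  moreover have "(DV (x t) \<circ> (\<lambda>h. h *\<^sub>R v)) = (*) (DV (x t) v)"
    using linear.scaleR[OF bounded_linear.linear[OF bl]] by (auto simp: fun_eq_iff)
  ultimately show ?thesis by (simp add: has_field_derivative_def o_def)
qed

lemma Umeas: "(\<Union>n. DoS_int h dur n) \<in> sets lborel"
  by (intro sets.countable_UN) (auto simp: DoS_int_def)

lemma Xi_fm: "Xi h dur t \<in> fmeasurable lborel"
proof -
  have "Xi h dur t \<in> sets lborel" unfolding Xi_def by (intro sets.Int Umeas) simp
  moreover have "Xi h dur t \<subseteq> cbox 0 t" unfolding Xi_def cbox_interval by blast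
  ultimately show ?thesis by (metis fmeasurableI2 fmeasurable_cbox)
qed

lemma m_mono: "s \<le> t \<Longrightarrow> measure lborel (Xi h dur s) \<le> measure lborel (Xi h dur t)"
  by (rule measure_mono_fmeasurable[OF _ Xi_fm[THEN fmeasurableD] Xi_fm]) (auto simp: Xi_def)

lemma m_dos:
  assumes "0 \<le> s" "s \<le> t" "{s<..<t} \<subseteq> (\<Union>n. DoS_int h dur n)"
  shows "measure lborel (Xi h dur t) \<ge> measure lborel (Xi h dur s) + (t - s)"
proof -
  have "measure lborel (Xi h dur s \<union> {s<..<t}) = measure lborel (Xi h dur s) + measure lborel {s<..<t}"
    apply (rule measure_Union)
    using Xi_fm[of h dur s] assms(2) apply (auto simp: fmeasurable_def)[3]
    by (auto simp: Xi_def)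
  moreover have "measure lborel (Xi h dur s \<union> {s<..<t}) \<le> measure lborel (Xi h dur t)"
    apply (rule measure_mono_fmeasurable[OF _ _ Xi_fm])
    using assms Xi_fm[of h dur s] by (auto simp: Xi_def fmeasurable_def)
  ultimately show ?thesis using assms by simp
qed

lemma m0: "measure lborel (Xi h dur 0) = 0"
proof -
  have "Xi h dur 0 \<subseteq> cbox 0 (0::real)" by (auto simp: Xi_def cbox_interval)
  hence "measure lborel (Xi h dur 0) \<le> measure lborel (cbox 0 (0::real))"
    by (rule measure_mono_fmeasurable[OF _ Xi_fm[THEN fmeasurableD] fmeasurable_cbox])
  thus ?thesis by (simp add: measure_nonneg antisym cbox_interval)
qed



lemma inv_bound:
  assumes K: "classK_inf a" and "0 \<le> \<beta>" "0 \<le> z" "a z \<le> \<beta>"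
  shows "z \<le> inv_into {0..} a \<beta>"
proof -
  have sm: "strict_mono_on {0..} a" and a0: "a 0 = 0" and ac: "continuous_on {0..} a"
    and al: "filterlim a at_top at_top" using K by (auto simp: classK_inf_def)
  have "eventually (\<lambda>s. \<beta> \<le> a s) at_top" using al by (simp add: filterlim_at_top)
  then obtain N where N: "\<And>s. s \<ge> N \<Longrightarrow> \<beta> \<le> a s" by (auto simp: eventually_at_top_linorder)
  define T where "T = max N 0"
  have "\<exists>y\<ge>0. y \<le> T \<and> a y = \<beta>"
    by (rule IVT') (use a0 assms N[of T] T_def continuous_on_subset[OF ac] in auto)
  then obtain y where y: "0 \<le> y" "a y = \<beta>" by blast
  have iv: "inv_into {0..} a \<beta> = y"
    by (rule inv_into_f_eq[OF strict_mono_on_imp_inj_on[OF sm]]) (use y in auto)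
  show ?thesis
  proof (rule ccontr)
    assume "\<not> ?thesis"
    hence "y < z" using iv by simp
    hence "a y < a z" using strict_mono_onD[OF sm, of y z] y(1) assms(3) by simp
    thus False using y assms by simp
  qed
qed

theorem theorem1:
  fixes f :: "'a::euclidean_space \<Rightarrow> 'b \<Rightarrow> 'a" and kfb :: "'a \<Rightarrow> 'b"
    and V :: "'a \<Rightarrow> real" and DV :: "'a \<Rightarrow> 'a \<Rightarrow> real"
    and \<alpha>1 \<alpha>2 \<gamma>2 :: "real \<Rightarrow> real"
    and lam c \<kappa> \<tau> \<mu> :: real
    and h dur :: "nat \<Rightarrow> real" and tk :: "nat \<Rightarrow> ereal" and x :: "real \<Rightarrow> 'a"
  assumes K1: "classK_inf \<alpha>1" and K2: "classK_inf \<alpha>2" and Kg: "classK_inf \<gamma>2"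
    and lam_pos: "lam > 0"
    and V_bounds: "\<forall>z. \<alpha>1 (norm z) \<le> V z \<and> V z \<le> \<alpha>2 (norm z)"
    and V_deriv: "\<forall>z. (V has_derivative DV z) (at z)"
    and ISS: "\<forall>z e. DV z (f z (kfb (z + e))) \<le> - lam * V z + \<gamma>2 (norm e)"
    and h0: "h 0 \<ge> 0" and dur_pos: "\<forall>n. dur n > 0"
    and c_range: "0 < c" "c < 1"
    and A1: "filterlim h at_top sequentially" "\<kappa> \<ge> 0" "\<tau> > 0"
      "\<forall>t\<ge>0. measure lborel (Xi h dur t) \<le> \<kappa> + t / \<tau>"
    and A2: "\<mu> > 0" "\<forall>r\<ge>0. \<gamma>2 (4 * r) \<le> \<mu> * \<alpha>1 r"
    and tau_cond: "\<tau> > (c * lam) / (c * lam + (lam * (1 - c) + 2 * \<mu>))"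
    and sol: "is_solution f kfb V \<gamma>2 lam c h dur tk x"
  shows "\<forall>t\<ge>0. norm (x t) \<le> inv_into {0..} \<alpha>1
           (exp (\<kappa> * (c * lam + (lam * (1 - c) + 2 * \<mu>)))
            * exp (- (c * lam - (c * lam + (lam * (1 - c) + 2 * \<mu>)) / \<tau>) * t)
            * \<alpha>2 (norm (x 0)))"
proof -
  define U where "U = (\<Union>n. DoS_int h dur n)"
  define w1 where "w1 = c * lam"
  define w2 where "w2 = lam * (1 - c) + 2 * \<mu>"
  define b where "b = lam * (1 - c) + \<mu>"
  define W where "W = w1 + w2"
  define m where "m t = measure lborel (Xi h dur t)" for t
  define G where "G t = exp (- w1 * t + W * m t)" for t
  define V0 where "V0 = V (x 0)"
  define S where "S k = {j. j \<le> k \<and> (\<exists>r. tk j = ereal r \<and> r \<notin> U)}" for k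
  define yv where "yv k = (if S k = {} then 0 else x (real_of_ereal (tk (Max (S k)))))" for k
  have lc: "lam * (1 - c) > 0" using lam_pos c_range by simp
  have w1pos: "w1 > 0" and w2pos: "w2 > 0" and bpos: "b > 0" and Wpos: "W > 0"
    using lam_pos c_range A2(1) lc unfolding w1_def w2_def b_def W_def by (simp_all add: add_pos_pos)
  have WW: "W - w1 = w2" by (simp add: W_def)
  note solD = sol[unfolded is_solution_def]
  have xcont: "continuous_on {0..} x" and tk0: "tk 0 = 0"
    and fin: "\<And>t. finite {k. tk k \<le> ereal t}"
    and infst: "\<And>k. tk k = \<infinity> \<Longrightarrow> tk (Suc k) = \<infinity>"
    and nodos: "\<And>k r. tk k = ereal r \<Longrightarrow> r \<notin> U \<Longrightarrow>
        tk (Suc k) = Inf (ereal ` {s. s > r \<and>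
            \<not> (\<gamma>2 (4 * norm (x r - x s)) \<le> lam * (1 - c) * V (x s))})"
    and dos: "\<And>k r n. tk k = ereal r \<Longrightarrow> r \<in> DoS_int h dur n \<Longrightarrow>
        tk (Suc k) = ereal (h n + dur n)"
    and xder: "\<And>t. t > 0 \<Longrightarrow> (\<forall>k. tk k \<noteq> ereal t) \<Longrightarrow>
        (x has_vector_derivative f (x t) (kfb (held x h dur tk t))) (at t)"
    using solD by (auto simp: U_def)
  have smg: "strict_mono_on {0..} \<gamma>2" and g0: "\<gamma>2 0 = 0" and gcont: "continuous_on {0..} \<gamma>2"
    using Kg by (auto simp: classK_inf_def)
  have gmono: "\<gamma>2 p \<le> \<gamma>2 q" if "0 \<le> p" "p \<le> q" for p q
    using strict_mono_on_leD[OF smg, of p q] that by auto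
  have sm1: "strict_mono_on {0..} \<alpha>1" and a10: "\<alpha>1 0 = 0" and a1cont: "continuous_on {0..} \<alpha>1"
    and a1lim: "filterlim \<alpha>1 at_top at_top"
    using K1 by (auto simp: classK_inf_def)
  have a1nn: "\<alpha>1 p \<ge> 0" if "p \<ge> 0" for p
    using strict_mono_on_leD[OF sm1, of 0 p] that a10 by auto
  have Vnn: "V z \<ge> 0" for z using V_bounds a1nn[of "norm z"] by (metis norm_ge_zero order_trans)
  have gV: "\<gamma>2 (2 * norm z) \<le> \<mu> * V z" for z
  proof -
    have "\<gamma>2 (2 * norm z) \<le> \<gamma>2 (4 * norm z)" by (rule gmono) auto
    also have "\<dots> \<le> \<mu> * \<alpha>1 (norm z)" using A2 by auto
    also have "\<dots> \<le> \<mu> * V z" using V_bounds A2 by (simp add: mult_left_mono)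
    finally show ?thesis .
  qed
  have V0nn: "V0 \<ge> 0" by (simp add: V0_def Vnn)
  have Gpos: "G t > 0" for t by (simp add: G_def)
  have m_mono': "m s \<le> m t" if "s \<le> t" for s t unfolding m_def by (rule m_mono[OF that])
  have G1: "exp (- w1 * (t - s)) * G s \<le> G t" if "s \<le> t" for s t
  proof -
    have "exp (- w1 * (t - s)) * G s = exp (- w1 * t + W * m s)"
      by (simp add: G_def exp_add[symmetric] algebra_simps)
    also have "\<dots> \<le> G t" unfolding G_def using m_mono'[OF that] Wpos by simp
    finally show ?thesis .
  qed
  have G2: "exp (w2 * (t - s)) * G s \<le> G t" if "0 \<le> s" "s \<le> t" "{s<..<t} \<subseteq> U" for s t
  proof -
    have mm: "m t \<ge> m s + (t - s)" unfolding m_def using m_dos[OF that[unfolded U_def]] .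
    have "exp (w2 * (t - s)) * G s = exp (- w1 * t + W * (m s + (t - s)))"
      by (simp add: G_def exp_add[symmetric] algebra_simps W_def)
    also have "\<dots> \<le> G t" unfolding G_def using mm Wpos by simp
    finally show ?thesis .
  qed
  have G0: "G 0 = 1" using m0 by (simp add: G_def m_def)
  have stepm: "tk k \<le> tk (Suc k)" if "0 \<le> tk k" for k
  proof (cases "tk k")
    case (real r)
    show ?thesis
    proof (cases "r \<in> U")
      case True
      then obtain n where n: "r \<in> DoS_int h dur n" by (auto simp: U_def)
      show ?thesis using dos[OF real n] real n dur_pos by (auto simp: DoS_int_def)
    next
      case False
      show ?thesis unfolding nodos[OF real False] real by (rule Inf_greatest) auto
    qed
  next
    case PInf thus ?thesis using infst by simp
  next
    case MInf thus ?thesis using that by simp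
  qed
  have tknn: "0 \<le> tk k" for k
  proof (induction k)
    case 0 thus ?case by (simp add: tk0)
  next
    case (Suc k) thus ?case using stepm[OF Suc] by simp
  qed
  have inc: "incseq tk" by (rule incseq_SucI) (use stepm tknn in auto)
  have incD: "tk i \<le> tk j" if "i \<le> j" for i j using inc that by (simp add: incseq_def)
  have finite_tk: "\<exists>r. tk k = ereal r \<and> 0 \<le> r" if "tk k \<le> ereal t" for k t
    using tknn[of k] that by (cases "tk k") auto
  have heldseg: "held x h dur tk t = yv k" if tr: "tk k = ereal r" "r \<le> t" "ereal t < tk (Suc k)" for k r t
  proof -
    have ks: "kset h dur tk t = S k"
    proof (intro set_eqI iffI)
      fix j assume "j \<in> kset h dur tk t"
      then obtain rj where rj: "tk j = ereal rj" "0 \<le> rj" "rj \<le> t" "rj \<notin> U"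
        by (auto simp: kset_def Theta_def U_def)
      have "j \<le> k"
      proof (rule ccontr)
        assume "\<not> j \<le> k" hence "Suc k \<le> j" by simp
        hence "tk (Suc k) \<le> tk j" by (rule incD)
        moreover have "ereal rj \<le> ereal t" using rj by simp
        ultimately show False using rj tr by (metis leD order_trans)
      qed
      thus "j \<in> S k" using rj by (auto simp: S_def)
    next
      fix j assume "j \<in> S k"
      then obtain rj where rj: "j \<le> k" "tk j = ereal rj" "rj \<notin> U" by (auto simp: S_def)
      have "tk j \<le> tk k" using rj by (intro incD) simp
      hence "rj \<le> t" using rj tr by simp
      moreover have "0 \<le> rj" using tknn[of j] rj by simp
      ultimately show "j \<in> kset h dur tk t" using rj by (auto simp: kset_def Theta_def U_def)
    qed
    show ?thesis unfolding held_def kidx_def ks yv_def by simp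
  qed
  have noupd: "\<forall>j. tk j \<noteq> ereal t" if tr: "tk k = ereal r" "r < t" "ereal t < tk (Suc k)" for k r t
  proof
    fix j show "tk j \<noteq> ereal t"
    proof (cases "j \<le> k")
      case True
      hence "tk j \<le> tk k" by (rule incD)
      thus ?thesis using tr by auto
    next
      case False
      hence "tk (Suc k) \<le> tk j" by (intro incD) simp
      thus ?thesis using tr by auto
    qed
  qed
  have Vcont: "continuous_on UNIV V"
    using V_deriv has_derivative_continuous continuous_at_imp_continuous_on by blast
  have Vxcont: "continuous_on {p..q} (\<lambda>s. V (x s))" if "0 \<le> p" for p q
    by (rule continuous_on_compose2[OF Vcont continuous_on_subset[OF xcont]]) (use that in auto)
  have segder: "((\<lambda>s. V (x s)) has_real_derivative DV (x t) (f (x t) (kfb (yv k)))) (at t)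
      \<and> DV (x t) (f (x t) (kfb (yv k))) \<le> - lam * V (x t) + \<gamma>2 (norm (yv k - x t))"
    if tr: "tk k = ereal r" "r < t" "ereal t < tk (Suc k)" for k r t
  proof
    have r0: "0 \<le> r" using tknn[of k] tr by simp
    have "(x has_vector_derivative f (x t) (kfb (held x h dur tk t))) (at t)"
      by (rule xder) (use r0 tr noupd[OF tr] in auto)
    thus "((\<lambda>s. V (x s)) has_real_derivative DV (x t) (f (x t) (kfb (yv k)))) (at t)"
      using heldseg[of k r t] tr chain_V[OF V_deriv] by simp
    show "DV (x t) (f (x t) (kfb (yv k))) \<le> - lam * V (x t) + \<gamma>2 (norm (yv k - x t))"
      using ISS[rule_format, of "x t" "yv k - x t"] by simp
  qed
  have step: "(\<forall>t. r \<le> t \<and> ereal t \<le> tk (Suc k) \<longrightarrow> V (x t) \<le> G t * V0)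
      \<and> (\<forall>r'. tk (Suc k) = ereal r' \<longrightarrow> r' \<in> U \<longrightarrow> \<gamma>2 (2 * norm (yv (Suc k))) \<le> b * G r' * V0)"
    if tr: "tk k = ereal r" and inv1: "V (x r) \<le> G r * V0"
      and inv2: "r \<in> U \<longrightarrow> \<gamma>2 (2 * norm (yv k)) \<le> b * G r * V0" for k r
  proof -
    have r0: "0 \<le> r" using tknn[of k] tr by simp
    have Sk_next: "S (Suc k) = S k" if "tk (Suc k) = ereal r'" "r' \<in> U" for r'
      using that by (auto simp: S_def le_Suc_eq)
    have yk_next: "yv (Suc k) = yv k" if "tk (Suc k) = ereal r'" "r' \<in> U" for r'
      using Sk_next[OF that] by (simp add: yv_def)
    show ?thesis
    proof (cases "r \<in> U")
      case False
      have yk: "yv k = x r"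
      proof -
        have kS: "k \<in> S k" using tr False by (auto simp: S_def)
        moreover have "finite (S k)" by (auto simp: S_def)
        ultimately have "Max (S k) = k" by (auto simp: S_def intro!: Max_eqI)
        thus ?thesis using kS tr by (auto simp: yv_def)
      qed
      have cond: "\<gamma>2 (4 * norm (x r - x t)) \<le> lam * (1 - c) * V (x t)"
        if "r < t" "ereal t < tk (Suc k)" for t
      proof (rule ccontr)
        assume "\<not> ?thesis"
        hence "ereal t \<in> ereal ` {s. s > r \<and> \<not> (\<gamma>2 (4 * norm (x r - x s)) \<le> lam * (1 - c) * V (x s))}"
          using that by auto
        hence "Inf (ereal ` {s. s > r \<and> \<not> (\<gamma>2 (4 * norm (x r - x s)) \<le> lam * (1 - c) * V (x s))}) \<le> ereal t"
          by (rule Inf_lower)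
        hence "tk (Suc k) \<le> ereal t" using nodos[OF tr False] by simp
        thus False using that by simp
      qed
      have dbound: "DV (x t) (f (x t) (kfb (yv k))) \<le> - w1 * V (x t)"
        if "r < t" "ereal t < tk (Suc k)" for t
      proof -
        have "\<gamma>2 (norm (yv k - x t)) \<le> \<gamma>2 (4 * norm (x r - x t))" using yk by (intro gmono) auto
        also have "\<dots> \<le> lam * (1 - c) * V (x t)" by (rule cond[OF that])
        finally have g: "\<gamma>2 (norm (yv k - x t)) \<le> lam * (1 - c) * V (x t)" .
        have eq: "lam * (1 - c) * V (x t) = lam * V (x t) - w1 * V (x t)" by (simp add: w1_def algebra_simps)
        show ?thesis using segder[OF tr that] g eq by linarith
      qed
      have seg: "V (x t) \<le> G t * V0" if tt: "r \<le> t" "ereal t \<le> tk (Suc k)" for t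
      proof -
        define F where "F s = V (x s) * exp (w1 * (s - r)) - V (x r)" for s
        define F' where "F' s = DV (x s) (f (x s) (kfb (yv k))) * exp (w1 * (s - r)) + V (x s) * (exp (w1 * (s - r)) * w1)" for s
        have "F t \<le> 0"
        proof (rule cmp[of r t F F'])
          show "r \<le> t" by fact
          show "continuous_on {r..t} F" unfolding F_def
            by (intro continuous_intros Vxcont[OF r0])
          show "(F has_real_derivative F' s) (at s)" if "r < s" "s < t" for s
          proof -
            have "ereal s < ereal t" using that by simp
            hence lt: "ereal s < tk (Suc k)" using tt(2) by (rule less_le_trans)
            note d = segder[OF tr that(1) lt, THEN conjunct1]
            show ?thesis unfolding F_def F'_def
              by (auto intro!: derivative_eq_intros d)
          qed
          show "F r \<le> 0" by (simp add: F_def)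
          show "F' s \<le> 0" if "r < s" "s < t" "F s > 0" for s
          proof -
            have "ereal s < ereal t" using that by simp
            hence lt: "ereal s < tk (Suc k)" using tt(2) by (rule less_le_trans)
            have "DV (x s) (f (x s) (kfb (yv k))) + w1 * V (x s) \<le> 0" using dbound[OF that(1) lt] by simp
            hence "exp (w1 * (s - r)) * (DV (x s) (f (x s) (kfb (yv k))) + w1 * V (x s)) \<le> 0"
              by (simp add: mult_nonneg_nonpos)
            thus ?thesis by (simp add: F'_def algebra_simps)
          qed
        qed
        hence a: "V (x t) * exp (w1 * (t - r)) \<le> V (x r)" by (simp add: F_def)
        have e1: "exp (w1 * (t - r)) * exp (- w1 * (t - r)) = 1" by (simp add: exp_add[symmetric])
        have "V (x t) * exp (w1 * (t - r)) * exp (- w1 * (t - r)) \<le> V (x r) * exp (- w1 * (t - r))"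
          by (rule mult_right_mono[OF a]) simp
        hence "V (x t) \<le> V (x r) * exp (- w1 * (t - r))" by (metis e1 mult.assoc mult.right_neutral)
        also have "\<dots> \<le> G r * V0 * exp (- w1 * (t - r))" by (rule mult_right_mono[OF inv1]) simp
        also have "\<dots> = (exp (- w1 * (t - r)) * G r) * V0" by (simp add: algebra_simps)
        also have "\<dots> \<le> G t * V0" by (rule mult_right_mono[OF G1[OF tt(1)] V0nn])
        finally show ?thesis .
      qed
      have nxt: "\<gamma>2 (2 * norm (yv (Suc k))) \<le> b * G r' * V0" if rt: "tk (Suc k) = ereal r'" "r' \<in> U" for r'
      proof -
        have "r \<noteq> r'" using False rt by auto
        moreover have "r \<le> r'" using incD[of k "Suc k"] tr rt by simp
        ultimately have rr: "r < r'" by simp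
        have cx: "continuous_on {r..r'} x" by (rule continuous_on_subset[OF xcont]) (use r0 in auto)
        have c1: "continuous_on {r..r'} (\<lambda>s. 4 * norm (x r - x s))" by (intro continuous_intros cx)
        have c2: "continuous_on {r..r'} (\<lambda>s. \<gamma>2 (4 * norm (x r - x s)))"
          by (rule continuous_on_compose2[OF gcont c1]) auto
        define \<phi> where "\<phi> s = \<gamma>2 (4 * norm (x r - x s)) - lam * (1 - c) * V (x s)" for s
        have cphi: "continuous_on (closure {r<..<r'}) \<phi>" unfolding \<phi>_def closure_greaterThanLessThan[OF rr]
          by (intro continuous_intros c2 Vxcont[OF r0])
        have "\<phi> r' \<le> 0"
        proof (rule continuous_le_on_closure[OF cphi])
          show "r' \<in> closure {r<..<r'}" using rr by (simp add: closure_greaterThanLessThan)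
          show "\<phi> s \<le> 0" if "s \<in> {r<..<r'}" for s
            using cond[of s] that rt by (simp add: \<phi>_def)
        qed
        hence cr: "\<gamma>2 (4 * norm (x r - x r')) \<le> lam * (1 - c) * V (x r')" by (simp add: \<phi>_def)
        have tri: "2 * norm (x r) \<le> 2 * norm (x r - x r') + 2 * norm (x r')"
          using norm_triangle_ineq[of "x r - x r'" "x r'"] by simp
        have "\<gamma>2 (2 * norm (x r)) \<le> \<gamma>2 (2 * (2 * norm (x r - x r'))) + \<gamma>2 (2 * (2 * norm (x r')))"
          by (rule gsum[OF Kg _ _ _ tri]) auto
        also have "\<dots> = \<gamma>2 (4 * norm (x r - x r')) + \<gamma>2 (4 * norm (x r'))" by simp
        also have "\<dots> \<le> lam * (1 - c) * V (x r') + \<mu> * V (x r')"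
          using cr A2(2) V_bounds A2(1) mult_left_mono[of "\<alpha>1 (norm (x r'))" "V (x r')" \<mu>]
          by (smt (verit) norm_ge_zero)
        also have "\<dots> = b * V (x r')" by (simp add: b_def algebra_simps)
        also have "\<dots> \<le> b * (G r' * V0)" using seg[of r'] rr rt bpos by (intro mult_left_mono) auto
        finally show ?thesis using yk_next[OF rt] yk by (simp add: mult.assoc)
      qed
      show ?thesis using seg nxt by blast
    next
      case True
      then obtain n where n: "r \<in> DoS_int h dur n" by (auto simp: U_def)
      define r' where "r' = h n + dur n"
      have tnext: "tk (Suc k) = ereal r'" using dos[OF tr n] by (simp add: r'_def)
      have rr: "r < r'" using n by (simp add: DoS_int_def r'_def)
      have "{r<..<r'} \<subseteq> DoS_int h dur n" using n by (auto simp: DoS_int_def r'_def)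
      hence inU: "{r<..<r'} \<subseteq> U" by (auto simp: U_def)
      define P where "P = G r * V0"
      have Pnn: "P \<ge> 0" using Gpos[of r] V0nn by (simp add: P_def)
      have hy: "\<gamma>2 (2 * norm (yv k)) \<le> b * P" using inv2 True by (simp add: P_def mult.assoc)
      have dbound: "DV (x t) (f (x t) (kfb (yv k))) \<le> (\<mu> - lam) * V (x t) + b * P"
        if "r < t" "ereal t < tk (Suc k)" for t
      proof -
        have "\<gamma>2 (norm (yv k - x t)) \<le> \<gamma>2 (2 * norm (yv k)) + \<gamma>2 (2 * norm (x t))"
          by (rule gsum[OF Kg]) (auto simp: norm_triangle_ineq4)
        thus ?thesis using segder[OF tr that] hy gV[of "x t"] by (simp add: algebra_simps)
      qed
      have seg: "V (x t) \<le> G t * V0" if tt: "r \<le> t" "ereal t \<le> tk (Suc k)" for t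
      proof -
        have tr': "t \<le> r'" using tt tnext by simp
        define F where "F s = V (x s) * exp (- w2 * (s - r)) - P" for s
        define F' where "F' s = DV (x s) (f (x s) (kfb (yv k))) * exp (- w2 * (s - r)) + V (x s) * (exp (- w2 * (s - r)) * (- w2))" for s
        have "F t \<le> 0"
        proof (rule cmp[of r t F F'])
          show "r \<le> t" by fact
          show "continuous_on {r..t} F" unfolding F_def
            by (intro continuous_intros Vxcont[OF r0])
          show "(F has_real_derivative F' s) (at s)" if "r < s" "s < t" for s
          proof -
            have "ereal s < ereal t" using that by simp
            hence lt: "ereal s < tk (Suc k)" using tt(2) by (rule less_le_trans)
            note d = segder[OF tr that(1) lt, THEN conjunct1]
            show ?thesis unfolding F_def F'_def
              by (auto intro!: derivative_eq_intros d)
          qed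
          show "F r \<le> 0" using inv1 by (simp add: F_def P_def)
          show "F' s \<le> 0" if "r < s" "s < t" "F s > 0" for s
          proof -
            have "ereal s < ereal t" using that by simp
            hence lt: "ereal s < tk (Suc k)" using tt(2) by (rule less_le_trans)
            define e where "e = exp (- w2 * (s - r))"
            have e0: "0 < e" and e1: "e \<le> 1" using that w2pos by (auto simp: e_def mult_nonneg_nonneg)
            have "V (x s) * e > P" using that(3) by (simp add: F_def e_def)
            moreover have "V (x s) * e \<le> V (x s)" using e1 Vnn[of "x s"] by (simp add: mult_left_le)
            ultimately have VP: "V (x s) > P" by simp
            have "b * P \<le> b * V (x s)" using VP bpos by simp
            moreover have "lam * V (x s) \<ge> 0" using lam_pos Vnn[of "x s"] by simp
            moreover have "w2 * V (x s) = b * V (x s) + \<mu> * V (x s)" by (simp add: w2_def b_def algebra_simps)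
            moreover have "(\<mu> - lam) * V (x s) = \<mu> * V (x s) - lam * V (x s)" by (simp add: algebra_simps)
            ultimately have "DV (x s) (f (x s) (kfb (yv k))) - w2 * V (x s) \<le> 0"
              using dbound[OF that(1) lt] by linarith
            hence "e * (DV (x s) (f (x s) (kfb (yv k))) - w2 * V (x s)) \<le> 0"
              using e0 by (simp add: mult_nonneg_nonpos)
            thus ?thesis by (simp add: F'_def e_def algebra_simps)
          qed
        qed
        hence a: "V (x t) * exp (- w2 * (t - r)) \<le> P" by (simp add: F_def)
        have e1: "exp (- w2 * (t - r)) * exp (w2 * (t - r)) = 1" by (simp add: exp_add[symmetric])
        have "V (x t) * exp (- w2 * (t - r)) * exp (w2 * (t - r)) \<le> P * exp (w2 * (t - r))"
          by (rule mult_right_mono[OF a]) simp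
        hence "V (x t) \<le> P * exp (w2 * (t - r))" by (metis e1 mult.assoc mult.right_neutral)
        also have "\<dots> = (exp (w2 * (t - r)) * G r) * V0" by (simp add: P_def algebra_simps)
        also have "\<dots> \<le> G t * V0"
          by (rule mult_right_mono[OF G2[OF r0 tt(1)] V0nn]) (use inU tr' in auto)
        finally show ?thesis .
      qed
      have nxt: "\<gamma>2 (2 * norm (yv (Suc k))) \<le> b * G r'' * V0" if rt: "tk (Suc k) = ereal r''" "r'' \<in> U" for r''
      proof -
        have r'': "r'' = r'" using rt tnext by simp
        have "G r \<le> exp (w2 * (r' - r)) * G r" using Gpos[of r] rr w2pos by (simp add: mult_le_cancel_right1)
        also have "\<dots> \<le> G r'" by (rule G2[OF r0]) (use rr inU in auto)
        finally have "P \<le> G r' * V0" using V0nn by (simp add: P_def mult_right_mono)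
        hence "b * P \<le> b * (G r' * V0)" using bpos by simp
        thus ?thesis using hy yk_next[OF rt] r'' by (simp add: mult.assoc)
      qed
      show ?thesis using seg nxt by blast
    qed
  qed
  have inv: "V (x r) \<le> G r * V0 \<and> (r \<in> U \<longrightarrow> \<gamma>2 (2 * norm (yv k)) \<le> b * G r * V0)" if "tk k = ereal r" for k r
    using that
  proof (induction k arbitrary: r)
    case 0
    hence r0: "r = 0" using tk0 by (simp add: zero_ereal_def)
    have "yv 0 = 0" if "0 \<in> U"
    proof -
      have "S 0 = {}" using that tk0 by (auto simp: S_def zero_ereal_def)
      thus ?thesis by (simp add: yv_def)
    qed
    then show ?case using r0 G0 g0 bpos V0nn by (auto simp: V0_def)
  next
    case (Suc k)
    obtain rk where rk: "tk k = ereal rk"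
      using incD[of k "Suc k"] Suc.prems tknn[of k] by (cases "tk k") auto
    have rkr: "rk \<le> r" using incD[of k "Suc k"] Suc.prems rk by simp
    note st = step[OF rk Suc.IH[OF rk, THEN conjunct1] Suc.IH[OF rk, THEN conjunct2]]
    show ?case using st rkr Suc.prems by auto
  qed
  have Vbound: "V (x t) \<le> G t * V0" if "t \<ge> 0" for t
  proof -
    define K where "K = {j. tk j \<le> ereal t}"
    have finK: "finite K" using fin by (simp add: K_def)
    have K0: "0 \<in> K" using that tk0 by (simp add: K_def zero_ereal_def)
    define k where "k = Max K"
    have kK: "k \<in> K" unfolding k_def using finK K0 by (intro Max_in) auto
    have "Suc k \<notin> K"
    proof
      assume "Suc k \<in> K"
      hence "Suc k \<le> k" unfolding k_def by (rule Max_ge[OF finK])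
      thus False by simp
    qed
    hence lt: "ereal t < tk (Suc k)" by (simp add: K_def not_le)
    from kK obtain r where r: "tk k = ereal r" "r \<le> t" using finite_tk[of k t] by (auto simp: K_def)
    note st = step[OF r(1) inv[OF r(1), THEN conjunct1] inv[OF r(1), THEN conjunct2]]
    show ?thesis using st r lt by auto
  qed
  have final: "norm (x t) \<le> inv_into {0..} \<alpha>1 (exp (\<kappa> * W) * exp (- (w1 - W / \<tau>) * t) * \<alpha>2 (norm (x 0)))"
    if t0: "t \<ge> 0" for t
  proof (rule inv_bound[OF K1 _ norm_ge_zero])
    have "W * m t \<le> W * (\<kappa> + t / \<tau>)" using A1(4) t0 Wpos by (simp add: m_def)
    hence "- w1 * t + W * m t \<le> \<kappa> * W + - (w1 - W / \<tau>) * t" by (simp add: algebra_simps)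
    hence "G t \<le> exp (\<kappa> * W) * exp (- (w1 - W / \<tau>) * t)" by (simp add: G_def exp_add[symmetric])
    moreover have "V0 \<le> \<alpha>2 (norm (x 0))" using V_bounds by (simp add: V0_def)
    ultimately have "G t * V0 \<le> exp (\<kappa> * W) * exp (- (w1 - W / \<tau>) * t) * \<alpha>2 (norm (x 0))"
      using Gpos[of t] V0nn by (intro mult_mono) auto
    moreover have "\<alpha>1 (norm (x t)) \<le> V (x t)" using V_bounds by simp
    ultimately show "\<alpha>1 (norm (x t)) \<le> exp (\<kappa> * W) * exp (- (w1 - W / \<tau>) * t) * \<alpha>2 (norm (x 0))"
      using Vbound[OF t0] by linarith
    thus "0 \<le> exp (\<kappa> * W) * exp (- (w1 - W / \<tau>) * t) * \<alpha>2 (norm (x 0))"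
      using a1nn[of "norm (x t)"] by simp
  qed
  show ?thesis using final unfolding W_def w1_def w2_def by blast
qed

end
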